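(* There exists a rational Diophantine sextuple. Specifically, the set $$\left\{ \tfrac{11}{192},\ \tfrac{35}{192},\ \tfrac{155}{27},\ \tfrac{512}{27},\ \tfrac{1235}{48},\ \tfrac{180873}{16} \right\}$$ consists of six distinct positive rational numbers such that for any two distinct elements $x, y$ of the set, $xy+1$ is the square of a rational number.
   Context: A rational Diophantine $m$-tuple is a set of $m$ distinct positive rational numbers such that the product of any two distinct elements, plus $1$, is the square of a rational number. A sextuple is the case $m=6$. *)

theory Defs
  imports Complex_Main
begin

definition rat_diophantine_tuple :: "nat \<Rightarrow> rat set \<Rightarrow> bool" where
  "rat_diophantine_tuple m S \<longleftrightarrow>
     finite S \<and> card S = m \<and> (\<forall>x\<in>S. x > 0) \<and>
     (\<forall>x\<in>S. \<forall>y\<in>S. x \<noteq> y \<longrightarrow> (\<exists>r::rat. x * y + 1 = r ^ 2))"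

end

theory Submission
  imports Defs
begin

lemma prs0: "\<exists>r::rat. (11/192) * (35/192) + 1 = r ^ 2" by (rule exI[of _ "(193/192)"]) (simp add: power2_eq_square)
lemma prs1: "\<exists>r::rat. (11/192) * (155/27) + 1 = r ^ 2" by (rule exI[of _ "(83/72)"]) (simp add: power2_eq_square)
lemma prs2: "\<exists>r::rat. (11/192) * (512/27) + 1 = r ^ 2" by (rule exI[of _ "(13/9)"]) (simp add: power2_eq_square)
lemma prs3: "\<exists>r::rat. (11/192) * (1235/48) + 1 = r ^ 2" by (rule exI[of _ "(151/96)"]) (simp add: power2_eq_square)
lemma prs4: "\<exists>r::rat. (11/192) * (180873/16) + 1 = r ^ 2" by (rule exI[of _ "(815/32)"]) (simp add: power2_eq_square)
lemma prs5: "\<exists>r::rat. (35/192) * (11/192) + 1 = r ^ 2" by (rule exI[of _ "(193/192)"]) (simp add: power2_eq_square)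
lemma prs6: "\<exists>r::rat. (35/192) * (155/27) + 1 = r ^ 2" by (rule exI[of _ "(103/72)"]) (simp add: power2_eq_square)
lemma prs7: "\<exists>r::rat. (35/192) * (512/27) + 1 = r ^ 2" by (rule exI[of _ "(19/9)"]) (simp add: power2_eq_square)
lemma prs8: "\<exists>r::rat. (35/192) * (1235/48) + 1 = r ^ 2" by (rule exI[of _ "(229/96)"]) (simp add: power2_eq_square)
lemma prs9: "\<exists>r::rat. (35/192) * (180873/16) + 1 = r ^ 2" by (rule exI[of _ "(1453/32)"]) (simp add: power2_eq_square)
lemma prs10: "\<exists>r::rat. (155/27) * (11/192) + 1 = r ^ 2" by (rule exI[of _ "(83/72)"]) (simp add: power2_eq_square)
lemma prs11: "\<exists>r::rat. (155/27) * (35/192) + 1 = r ^ 2" by (rule exI[of _ "(103/72)"]) (simp add: power2_eq_square)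
lemma prs12: "\<exists>r::rat. (155/27) * (512/27) + 1 = r ^ 2" by (rule exI[of _ "(283/27)"]) (simp add: power2_eq_square)
lemma prs13: "\<exists>r::rat. (155/27) * (1235/48) + 1 = r ^ 2" by (rule exI[of _ "(439/36)"]) (simp add: power2_eq_square)
lemma prs14: "\<exists>r::rat. (155/27) * (180873/16) + 1 = r ^ 2" by (rule exI[of _ "(1019/4)"]) (simp add: power2_eq_square)
lemma prs15: "\<exists>r::rat. (512/27) * (11/192) + 1 = r ^ 2" by (rule exI[of _ "(13/9)"]) (simp add: power2_eq_square)
lemma prs16: "\<exists>r::rat. (512/27) * (35/192) + 1 = r ^ 2" by (rule exI[of _ "(19/9)"]) (simp add: power2_eq_square)
lemma prs17: "\<exists>r::rat. (512/27) * (155/27) + 1 = r ^ 2" by (rule exI[of _ "(283/27)"]) (simp add: power2_eq_square)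
lemma prs18: "\<exists>r::rat. (512/27) * (1235/48) + 1 = r ^ 2" by (rule exI[of _ "(199/9)"]) (simp add: power2_eq_square)
lemma prs19: "\<exists>r::rat. (512/27) * (180873/16) + 1 = r ^ 2" by (rule exI[of _ "(463)"]) (simp add: power2_eq_square)
lemma prs20: "\<exists>r::rat. (1235/48) * (11/192) + 1 = r ^ 2" by (rule exI[of _ "(151/96)"]) (simp add: power2_eq_square)
lemma prs21: "\<exists>r::rat. (1235/48) * (35/192) + 1 = r ^ 2" by (rule exI[of _ "(229/96)"]) (simp add: power2_eq_square)
lemma prs22: "\<exists>r::rat. (1235/48) * (155/27) + 1 = r ^ 2" by (rule exI[of _ "(439/36)"]) (simp add: power2_eq_square)
lemma prs23: "\<exists>r::rat. (1235/48) * (512/27) + 1 = r ^ 2" by (rule exI[of _ "(199/9)"]) (simp add: power2_eq_square)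
lemma prs24: "\<exists>r::rat. (1235/48) * (180873/16) + 1 = r ^ 2" by (rule exI[of _ "(8629/16)"]) (simp add: power2_eq_square)
lemma prs25: "\<exists>r::rat. (180873/16) * (11/192) + 1 = r ^ 2" by (rule exI[of _ "(815/32)"]) (simp add: power2_eq_square)
lemma prs26: "\<exists>r::rat. (180873/16) * (35/192) + 1 = r ^ 2" by (rule exI[of _ "(1453/32)"]) (simp add: power2_eq_square)
lemma prs27: "\<exists>r::rat. (180873/16) * (155/27) + 1 = r ^ 2" by (rule exI[of _ "(1019/4)"]) (simp add: power2_eq_square)
lemma prs28: "\<exists>r::rat. (180873/16) * (512/27) + 1 = r ^ 2" by (rule exI[of _ "(463)"]) (simp add: power2_eq_square)
lemma prs29: "\<exists>r::rat. (180873/16) * (1235/48) + 1 = r ^ 2" by (rule exI[of _ "(8629/16)"]) (simp add: power2_eq_square)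

lemma tup: "rat_diophantine_tuple 6 {11/192, 35/192, 155/27, 512/27, 1235/48, 180873/16}"
  unfolding rat_diophantine_tuple_def using prs0 prs1 prs2 prs3 prs4 prs5 prs6 prs7 prs8 prs9 prs10 prs11 prs12 prs13 prs14 prs15 prs16 prs17 prs18 prs19 prs20 prs21 prs22 prs23 prs24 prs25 prs26 prs27 prs28 prs29 by simp

theorem mainTheorem1:
  shows "(\<exists>S. rat_diophantine_tuple 6 S) \<and>
         rat_diophantine_tuple 6 {11/192, 35/192, 155/27, 512/27, 1235/48, 180873/16}"
  using tup by blast

end
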